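(* (a) The cell $S_{z_2,z_2}$ is the disjoint union of exactly three $G$-orbits of points $(P,Pz_2,Pz_2n)$: $n=n(0,0,1)$, dimension $7$, stabilizer $\{d(1/a^2,a,a):a\in\mathbb{R}^\times\}$; $n=n(0,1,0)$, dimension $6$, stabilizer $\left\{\begin{pmatrix}a&z&0\\0&1/a^2&0\\0&0&a\end{pmatrix}:a\in\mathbb{R}^\times,z\in\mathbb{R}\right\}$; $n=n(0,0,0)$, dimension $5$, stabilizer $D\cdot\{n(x,0,0):x\in\mathbb{R}\}$. (b) The cell $S_{z_2,s_1}$ is a single $G$-orbit, that of $(P,Pz_2,Ps_1)$, of dimension $6$ with stabilizer $D$; the cell $S_{z_2,1}$ is a single $G$-orbit, that of $(P,Pz_2,P)$, of dimension $5$ with stabilizer $D\cdot\{n(x,0,0):x\in\mathbb{R}\}$. (c) The cell $S_{z_2,s_2}$ is the disjoint union of exactly two $G$-orbits of points $(P,Pz_2,Ps_2n)$: $n=n(0,0,1)$, dimension $6$, stabilizer $\left\{\begin{pmatrix}1/a^2&x&0\\0&a&0\\0&0&a\end{pmatrix}:a\in\mathbb{R}^\times,x\in\mathbb{R}\right\}$; $n=n(0,0,0)$, dimension $5$, stabilizer $D\cdot\{n(x,0,0):x\in\mathbb{R}\}$.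
   Context: $G=\mathrm{SL}_3(\mathbb{R})$, $P$ the upper triangular matrices in $G$, $D$ the diagonal matrices in $G$; $G$ acts on $X=(P\backslash G)^3$ by right multiplication in each coordinate. $n(x,y,z)=\begin{pmatrix}1&x&y\\0&1&z\\0&0&1\end{pmatrix}$, $d(a,b,c)=\operatorname{diag}(a,b,c)$. $1$ is the identity matrix, $s_1=\begin{pmatrix}0&1&0\\1&0&0\\0&0&-1\end{pmatrix}$, $s_2=\begin{pmatrix}-1&0&0\\0&0&1\\0&1&0\end{pmatrix}$, $z_2=\begin{pmatrix}0&0&1\\-1&0&0\\0&-1&0\end{pmatrix}$. $S_{v,w}=\big(\{P\}\times P\backslash PvP\times P\backslash PwP\big)\cdot G$. The stabilizer of $(P,Pv,Pwn)$ is $P\cap v^{-1}Pv\cap (wn)^{-1}P(wn)$. *)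

theory Defs
  imports "HOL-Analysis.Analysis"
begin

type_synonym mat3 = "real^3^3"

definition mat3 :: "real \<Rightarrow> real \<Rightarrow> real \<Rightarrow> real \<Rightarrow> real \<Rightarrow> real \<Rightarrow> real \<Rightarrow> real \<Rightarrow> real \<Rightarrow> mat3" where
  "mat3 a b c d e f g h i = vector [vector [a,b,c], vector [d,e,f], vector [g,h,i]]"

definition SL3 :: "mat3 set" where
  "SL3 = {A. det A = 1}"

definition Pgrp :: "mat3 set" where
  "Pgrp = {A \<in> SL3. A$2$1 = 0 \<and> A$3$1 = 0 \<and> A$3$2 = 0}"

definition Dgrp :: "mat3 set" where
  "Dgrp = {A \<in> SL3. A$1$2 = 0 \<and> A$1$3 = 0 \<and> A$2$1 = 0 \<and> A$2$3 = 0 \<and> A$3$1 = 0 \<and> A$3$2 = 0}"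

definition nmat :: "real \<Rightarrow> real \<Rightarrow> real \<Rightarrow> mat3" where
  "nmat x y z = mat3 1 x y 0 1 z 0 0 1"

definition dmat :: "real \<Rightarrow> real \<Rightarrow> real \<Rightarrow> mat3" where
  "dmat a b c = mat3 a 0 0 0 b 0 0 0 c"

definition s1 :: mat3 where "s1 = mat3 0 1 0 1 0 0 0 0 (-1)"
definition s2 :: mat3 where "s2 = mat3 (-1) 0 0 0 0 1 0 1 0"
definition z2 :: mat3 where "z2 = mat3 0 0 1 (-1) 0 0 0 (-1) 0"

definition setmul :: "mat3 set \<Rightarrow> mat3 set \<Rightarrow> mat3 set" where
  "setmul A B = {a ** b | a b. a \<in> A \<and> b \<in> B}"

definition coset :: "mat3 \<Rightarrow> mat3 set" where
  "coset g = (\<lambda>p. p ** g) ` Pgrp"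

definition flags :: "mat3 set set" where
  "flags = coset ` SL3"

definition cact :: "mat3 set \<Rightarrow> mat3 \<Rightarrow> mat3 set" where
  "cact C g = (\<lambda>c. c ** g) ` C"

definition Xsp :: "(mat3 set \<times> mat3 set \<times> mat3 set) set" where
  "Xsp = flags \<times> flags \<times> flags"

definition act :: "mat3 set \<times> mat3 set \<times> mat3 set \<Rightarrow> mat3 \<Rightarrow> mat3 set \<times> mat3 set \<times> mat3 set" where
  "act x g = (case x of (A, B, C) \<Rightarrow> (cact A g, cact B g, cact C g))"

definition orbit :: "mat3 set \<times> mat3 set \<times> mat3 set \<Rightarrow> (mat3 set \<times> mat3 set \<times> mat3 set) set" where
  "orbit x = act x ` SL3"

definition stab :: "mat3 set \<times> mat3 set \<times> mat3 set \<Rightarrow> mat3 set" where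
  "stab x = {g \<in> SL3. act x g = x}"

definition dcoset :: "mat3 \<Rightarrow> mat3 set" where
  "dcoset v = {p ** v ** q | p q. p \<in> Pgrp \<and> q \<in> Pgrp}"

definition cell :: "mat3 \<Rightarrow> mat3 \<Rightarrow> (mat3 set \<times> mat3 set \<times> mat3 set) set" where
  "cell v w = {act (coset (mat 1), coset y, coset y') g | y y' g.
                 y \<in> dcoset v \<and> y' \<in> dcoset w \<and> g \<in> SL3}"

fun mpow :: "mat3 \<Rightarrow> nat \<Rightarrow> mat3" where
  "mpow A 0 = mat 1"
| "mpow A (Suc n) = A ** mpow A n"

definition mexp :: "mat3 \<Rightarrow> mat3" where
  "mexp A = (\<Sum>n. (1 / fact n) *\<^sub>R mpow A n)"

definition lie_alg :: "mat3 set \<Rightarrow> mat3 set" where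
  "lie_alg H = {X. \<forall>t::real. mexp (t *\<^sub>R X) \<in> H}"

definition group_dim :: "mat3 set \<Rightarrow> nat" where
  "group_dim H = dim (lie_alg H)"

text \<open>Dimension of the orbit of x: the orbit is G/G_x, so dim = dim G - dim G_x.\<close>
definition orbit_dim :: "mat3 set \<times> mat3 set \<times> mat3 set \<Rightarrow> nat" where
  "orbit_dim x = group_dim SL3 - group_dim (stab x)"

end

theory Submission
  imports Defs
begin


lemma mat3_nth [simp]:
  "mat3 a b c d e f g h i $ 1 $ 1 = a" "mat3 a b c d e f g h i $ 1 $ 2 = b" "mat3 a b c d e f g h i $ 1 $ 3 = c"
  "mat3 a b c d e f g h i $ 2 $ 1 = d" "mat3 a b c d e f g h i $ 2 $ 2 = e" "mat3 a b c d e f g h i $ 2 $ 3 = f"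
  "mat3 a b c d e f g h i $ 3 $ 1 = g" "mat3 a b c d e f g h i $ 3 $ 2 = h" "mat3 a b c d e f g h i $ 3 $ 3 = i"
  by (simp_all add: mat3_def)

lemma mat3_eta: "A = mat3 (A$1$1) (A$1$2) (A$1$3) (A$2$1) (A$2$2) (A$2$3) (A$3$1) (A$3$2) (A$3$3)"
  by (simp add: vec_eq_iff forall_3)

lemma mat3_eq_iff [simp]: "(mat3 a b c d e f g h i = mat3 a' b' c' d' e' f' g' h' i') \<longleftrightarrow>
   a = a' \<and> b = b' \<and> c = c' \<and> d = d' \<and> e = e' \<and> f = f' \<and> g = g' \<and> h = h' \<and> i = i'"
  by (auto simp: vec_eq_iff forall_3)

lemma mat3_mult [simp]: "mat3 a b c d e f g h i ** mat3 a' b' c' d' e' f' g' h' i' =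
  mat3 (a*a'+b*d'+c*g') (a*b'+b*e'+c*h') (a*c'+b*f'+c*i')
       (d*a'+e*d'+f*g') (d*b'+e*e'+f*h') (d*c'+e*f'+f*i')
       (g*a'+h*d'+i*g') (g*b'+h*e'+i*h') (g*c'+h*f'+i*i')"
  by (simp add: vec_eq_iff forall_3 matrix_matrix_mult_def sum_3)

lemma det_mat3 [simp]: "det (mat3 a b c d e f g h i) = a*e*i + b*f*g + c*d*h - a*f*h - b*d*i - c*e*g"
  by (simp add: det_3)

lemma mat1_mat3: "mat 1 = mat3 1 0 0 0 1 0 0 0 1"
  by (simp add: vec_eq_iff forall_3 mat_def)

lemma scaleR_mat3 [simp]: "k *\<^sub>R mat3 a b c d e f g h i = mat3 (k*a) (k*b) (k*c) (k*d) (k*e) (k*f) (k*g) (k*h) (k*i)"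
  by (simp add: vec_eq_iff forall_3)

lemma add_mat3 [simp]: "mat3 a b c d e f g h i + mat3 a' b' c' d' e' f' g' h' i' =
  mat3 (a+a') (b+b') (c+c') (d+d') (e+e') (f+f') (g+g') (h+h') (i+i')"
  by (simp add: vec_eq_iff forall_3)

lemma zero_mat3: "(0::mat3) = mat3 0 0 0 0 0 0 0 0 0"
  by (simp add: vec_eq_iff forall_3)

definition inv3 :: "mat3 \<Rightarrow> mat3" where
  "inv3 A = mat3 (A$2$2*A$3$3 - A$2$3*A$3$2) (A$1$3*A$3$2 - A$1$2*A$3$3) (A$1$2*A$2$3 - A$1$3*A$2$2)
                 (A$2$3*A$3$1 - A$2$1*A$3$3) (A$1$1*A$3$3 - A$1$3*A$3$1) (A$1$3*A$2$1 - A$1$1*A$2$3)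
                 (A$2$1*A$3$2 - A$2$2*A$3$1) (A$1$2*A$3$1 - A$1$1*A$3$2) (A$1$1*A$2$2 - A$1$2*A$2$1)"

lemma inv3_mat3 [simp]: "inv3 (mat3 a b c d e f g h i) =
   mat3 (e*i - f*h) (c*h - b*i) (b*f - c*e) (f*g - d*i) (a*i - c*g) (c*d - a*f) (d*h - e*g) (b*g - a*h) (a*e - b*d)"
  by (simp add: inv3_def)

lemma mat3_cases: obtains a b c d e f g h i where "A = mat3 a b c d e f g h i"
  using mat3_eta by blast

lemma inv3_right: assumes "det A = 1" shows "A ** inv3 A = mat 1"
proof -
  obtain a b c d e f g h i where A: "A = mat3 a b c d e f g h i" by (rule mat3_cases)
  show ?thesis using assms unfolding A
    by (simp add: mat1_mat3 algebra_simps)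
qed

lemma inv3_left: assumes "det A = 1" shows "inv3 A ** A = mat 1"
proof -
  obtain a b c d e f g h i where A: "A = mat3 a b c d e f g h i" by (rule mat3_cases)
  show ?thesis using assms unfolding A
    by (simp add: mat1_mat3 algebra_simps)
qed

lemma det_inv3: "det A = 1 \<Longrightarrow> det (inv3 A) = 1"
  using det_mul[of A "inv3 A"] inv3_right[of A] by simp



lemma P_iff: "A \<in> Pgrp \<longleftrightarrow> det A = 1 \<and> A$2$1 = 0 \<and> A$3$1 = 0 \<and> A$3$2 = 0"
  by (simp add: Pgrp_def SL3_def)

lemma P_det: "A \<in> Pgrp \<Longrightarrow> det A = 1" by (simp add: P_iff)

lemma P_mult: "p \<in> Pgrp \<Longrightarrow> q \<in> Pgrp \<Longrightarrow> p ** q \<in> Pgrp"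
  unfolding P_iff det_mul by (simp add: matrix_matrix_mult_def sum_3)

lemma P_inv: assumes "p \<in> Pgrp" shows "inv3 p \<in> Pgrp"
proof -
  have "det (inv3 p) = 1" using det_inv3 P_det assms by blast
  moreover have "(inv3 p)$2$1 = 0 \<and> (inv3 p)$3$1 = 0 \<and> (inv3 p)$3$2 = 0"
    using assms unfolding P_iff inv3_def by simp
  ultimately show ?thesis unfolding P_iff by blast
qed

lemma P_one: "mat 1 \<in> Pgrp"
  by (simp add: P_iff mat1_mat3)

lemma inv3_one [simp]: "inv3 (mat 1) = mat 1"
  by (simp add: mat1_mat3)

lemma coset_mult: assumes "p \<in> Pgrp" shows "coset (p ** b) = coset b"
proof -
  have img: "(\<lambda>q. q ** p) ` Pgrp = Pgrp"
  proof
    show "(\<lambda>q. q ** p) ` Pgrp \<subseteq> Pgrp" using assms P_mult by auto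
    show "Pgrp \<subseteq> (\<lambda>q. q ** p) ` Pgrp"
    proof
      fix q assume q: "q \<in> Pgrp"
      have "q = (q ** inv3 p) ** p"
        using inv3_left[OF P_det[OF assms]] by (simp add: matrix_mul_assoc[symmetric])
      moreover have "q ** inv3 p \<in> Pgrp" using P_mult P_inv assms q by auto
      ultimately show "q \<in> (\<lambda>q. q ** p) ` Pgrp" by blast
    qed
  qed
  have "coset (p ** b) = (\<lambda>q. q ** b) ` ((\<lambda>q. q ** p) ` Pgrp)"
    unfolding coset_def image_image by (simp add: matrix_mul_assoc)
  then show ?thesis using img by (simp add: coset_def)
qed

lemma coset_self: "a \<in> coset a"
  unfolding coset_def using P_one by (auto intro!: image_eqI[where x="mat 1"])

lemma coset_eqD: "coset a = coset b \<Longrightarrow> \<exists>p\<in>Pgrp. a = p ** b"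
  using coset_self[of a] unfolding coset_def by auto

lemma coset_eq_iff: assumes "det b = 1" shows "coset a = coset b \<longleftrightarrow> a ** inv3 b \<in> Pgrp"
proof
  assume "coset a = coset b"
  then obtain p where p: "p \<in> Pgrp" "a = p ** b" using coset_eqD by blast
  then have "a ** inv3 b = p" using inv3_right[OF assms] by (simp add: matrix_mul_assoc[symmetric])
  then show "a ** inv3 b \<in> Pgrp" using p by simp
next
  assume "a ** inv3 b \<in> Pgrp"
  then have "coset ((a ** inv3 b) ** b) = coset b" by (rule coset_mult)
  then show "coset a = coset b" using inv3_left[OF assms] by (simp add: matrix_mul_assoc[symmetric])
qed

lemma cact_coset [simp]: "cact (coset a) g = coset (a ** g)"
  unfolding cact_def coset_def image_image by (simp add: matrix_mul_assoc)

lemma act_coset [simp]: "act (coset a, coset b, coset c) g = (coset (a ** g), coset (b ** g), coset (c ** g))"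
  by (simp add: act_def)

lemma SL3_mult: "g \<in> SL3 \<Longrightarrow> h \<in> SL3 \<Longrightarrow> g ** h \<in> SL3"
  by (simp add: SL3_def det_mul)

lemma SL3_inv: "g \<in> SL3 \<Longrightarrow> inv3 g \<in> SL3"
  by (simp add: SL3_def det_inv3)

lemma P_SL3: "p \<in> Pgrp \<Longrightarrow> p \<in> SL3" by (simp add: Pgrp_def)

lemma one_SL3: "mat 1 \<in> SL3" by (simp add: SL3_def)

lemma stab_iff:
  assumes "det v = 1" "det w = 1"
  shows "g \<in> stab (coset (mat 1), coset v, coset w) \<longleftrightarrow>
     g \<in> Pgrp \<and> v ** g ** inv3 v \<in> Pgrp \<and> w ** g ** inv3 w \<in> Pgrp"
proof -
  have 1: "coset g = coset (mat 1) \<longleftrightarrow> g \<in> Pgrp"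
    using coset_eq_iff[of "mat 1" g] by simp
  show ?thesis
    unfolding stab_def using coset_eq_iff[OF assms(1), of "v ** g"] coset_eq_iff[OF assms(2), of "w ** g"] 1
    by (auto simp: P_SL3)
qed

lemma act_act: "act (act (coset a, coset b, coset c) g) h = act (coset a, coset b, coset c) (g ** h)"
  by (simp add: matrix_mul_assoc)

lemma act_one: "act (coset a, coset b, coset c) (mat 1) = (coset a, coset b, coset c)"
  by simp

lemma orbit_disj:
  assumes "\<And>k. k \<in> SL3 \<Longrightarrow> act (coset a, coset b, coset c) k \<noteq> (coset a', coset b', coset c')"
  shows "orbit (coset a, coset b, coset c) \<inter> orbit (coset a', coset b', coset c') = {}"
proof (rule ccontr)
  assume "\<not> ?thesis"
  then obtain g h where g: "g \<in> SL3" "h \<in> SL3" and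
    e: "act (coset a, coset b, coset c) g = act (coset a', coset b', coset c') h"
    unfolding orbit_def by auto
  have "act (act (coset a, coset b, coset c) g) (inv3 h) = act (act (coset a', coset b', coset c') h) (inv3 h)"
    using e by simp
  then have "act (coset a, coset b, coset c) (g ** inv3 h) = (coset a', coset b', coset c')"
    unfolding act_act using inv3_right[of h] g by (simp add: SL3_def)
  moreover have "g ** inv3 h \<in> SL3" using g SL3_mult SL3_inv by blast
  ultimately show False using assms by blast
qed

lemma orbit_disj':
  assumes "det v = 1" "det w' = 1"
  and "\<And>k. k \<in> Pgrp \<Longrightarrow> v ** k ** inv3 v \<in> Pgrp \<Longrightarrow> w ** k ** inv3 w' \<in> Pgrp \<Longrightarrow> False"
  shows "orbit (coset (mat 1), coset v, coset w) \<inter> orbit (coset (mat 1), coset v, coset w') = {}"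
proof (rule orbit_disj)
  fix k assume k: "k \<in> SL3"
  show "act (coset (mat 1), coset v, coset w) k \<noteq> (coset (mat 1), coset v, coset w')"
  proof
    assume "act (coset (mat 1), coset v, coset w) k = (coset (mat 1), coset v, coset w')"
    then have "coset k = coset (mat 1)" "coset (v ** k) = coset v" "coset (w ** k) = coset w'" by auto
    then have "k \<in> Pgrp" "v ** k ** inv3 v \<in> Pgrp" "w ** k ** inv3 w' \<in> Pgrp"
      using coset_eq_iff[of "mat 1" k] coset_eq_iff[OF assms(1), of "v ** k"] coset_eq_iff[OF assms(2), of "w ** k"]
      by auto
    then show False using assms(3) by blast
  qed
qed

lemma dcoset_I: "p \<in> Pgrp \<Longrightarrow> q \<in> Pgrp \<Longrightarrow> p ** v ** q \<in> dcoset v"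
  unfolding dcoset_def by blast

lemma orbit_sub_cell:
  assumes "n \<in> Pgrp" "y' = w ** n"
  shows "orbit (coset (mat 1), coset v, coset y') \<subseteq> cell v w"
proof
  fix x assume "x \<in> orbit (coset (mat 1), coset v, coset y')"
  then obtain g where g: "g \<in> SL3" "x = act (coset (mat 1), coset v, coset y') g" unfolding orbit_def by auto
  have "v \<in> dcoset v" using dcoset_I[OF P_one P_one, of v] by simp
  moreover have "y' \<in> dcoset w" using dcoset_I[OF P_one assms(1), of w] assms(2) by simp
  ultimately show "x \<in> cell v w" unfolding cell_def using g by blast
qed

lemma cell_sub:
  assumes "det v = 1" "det w = 1"
  and core: "\<And>r. r \<in> Pgrp \<Longrightarrow> \<exists>x\<in>X. \<exists>k\<in>SL3. act x k = (coset (mat 1), coset v, coset (w ** r))"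
  and X: "\<And>x. x \<in> X \<Longrightarrow> \<exists>a b c. x = (coset a, coset b, coset c)"
  shows "cell v w \<subseteq> (\<Union>x\<in>X. orbit x)"
proof
  fix z assume "z \<in> cell v w"
  then obtain y y' g where yy: "y \<in> dcoset v" "y' \<in> dcoset w" "g \<in> SL3"
    and z: "z = act (coset (mat 1), coset y, coset y') g" unfolding cell_def by blast
  obtain p q where pq: "p \<in> Pgrp" "q \<in> Pgrp" "y = p ** v ** q" using yy(1) unfolding dcoset_def by blast
  obtain p' q' where pq': "p' \<in> Pgrp" "q' \<in> Pgrp" "y' = p' ** w ** q'" using yy(2) unfolding dcoset_def by blast
  define r where "r = q' ** inv3 q"
  have r: "r \<in> Pgrp" unfolding r_def using pq pq' P_mult P_inv by blast
  obtain x k where xk: "x \<in> X" "k \<in> SL3" "act x k = (coset (mat 1), coset v, coset (w ** r))"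
    using core[OF r] by blast
  obtain a b c where x: "x = (coset a, coset b, coset c)" using X[OF xk(1)] by blast
  have qinv: "inv3 q ** q = mat 1" using inv3_left P_det pq(2) by blast
  have "act x (k ** (q ** g)) = act (act x k) (q ** g)" unfolding x act_act by simp
  also have "\<dots> = (coset (q ** g), coset (v ** (q ** g)), coset (w ** r ** (q ** g)))"
    unfolding xk(3) by simp
  also have "\<dots> = (coset g, coset (y ** g), coset (y' ** g))"
  proof -
    have "coset (q ** g) = coset g" using coset_mult[OF pq(2)] .
    moreover have "coset (y ** g) = coset (v ** (q ** g))"
      unfolding pq(3) using coset_mult[OF pq(1), of "v ** q ** g"] by (simp add: matrix_mul_assoc)
    moreover have "w ** r ** (q ** g) = w ** q' ** g"
      unfolding r_def by (simp add: matrix_mul_assoc[symmetric]) (simp add: matrix_mul_assoc qinv)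
    moreover have "coset (y' ** g) = coset (w ** q' ** g)"
      unfolding pq'(3) using coset_mult[OF pq'(1), of "w ** q' ** g"] by (simp add: matrix_mul_assoc)
    ultimately show ?thesis by simp
  qed
  also have "\<dots> = z" unfolding z by simp
  finally have "z = act x (k ** (q ** g))" by simp
  moreover have "k ** (q ** g) \<in> SL3" using xk(2) yy(3) pq(2) SL3_mult P_SL3 by blast
  ultimately show "z \<in> (\<Union>x\<in>X. orbit x)" using xk(1) unfolding orbit_def by blast
qed



lemma mpow_scale: "mpow (t *\<^sub>R X) n = t ^ n *\<^sub>R mpow X n"
  by (induction n) (simp_all add: matrix_scalar_ac scalar_matrix_assoc[symmetric])

lemma mpow_one: "mpow X 1 = X" by simp

lemma mpow_bound:
  assumes m: "\<And>i j. \<bar>X$i$j\<bar> \<le> m"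
  shows "\<bar>mpow X n $ i $ j\<bar> \<le> (3*m)^n"
proof (induction n arbitrary: i j)
  case 0 then show ?case by (simp add: mat_def)
next
  case (Suc n)
  have m0: "0 \<le> m" using m[of 1 1] by simp
  have "\<bar>mpow X (Suc n) $ i $ j\<bar> = \<bar>\<Sum>k\<in>UNIV. X$i$k * mpow X n $k$j\<bar>"
    by (simp add: matrix_matrix_mult_def)
  also have "\<dots> \<le> (\<Sum>k\<in>UNIV. \<bar>X$i$k\<bar> * \<bar>mpow X n $k$j\<bar>)"
    by (rule order_trans[OF sum_abs]) (simp add: abs_mult)
  also have "\<dots> \<le> (\<Sum>k\<in>(UNIV::3 set). m * (3*m)^n)"
    by (rule sum_mono, rule mult_mono) (use m Suc.IH m0 in auto)
  also have "\<dots> = (3*m)^(Suc n)" by (simp add: sum_3)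
  finally show ?case .
qed

definition bnd :: "mat3 \<Rightarrow> real" where "bnd X = (\<Sum>i\<in>UNIV. \<Sum>j\<in>UNIV. \<bar>X$i$j\<bar>)"

lemma bnd_ge: "\<bar>X$i$j\<bar> \<le> bnd X"
proof -
  have "\<bar>X$i$j\<bar> \<le> (\<Sum>j\<in>UNIV. \<bar>X$i$j\<bar>)"
    by (rule member_le_sum) auto
  also have "\<dots> \<le> bnd X" unfolding bnd_def
    by (rule member_le_sum[where f="\<lambda>i. \<Sum>j\<in>UNIV. \<bar>X$i$j\<bar>"]) (auto intro: sum_nonneg)
  finally show ?thesis .
qed

lemma coef_summable: "summable (\<lambda>n. (mpow X n $ i $ j / fact n) * y ^ n)"
proof (rule summable_comparison_test)
  show "summable (\<lambda>n. inverse (fact n) * (3 * bnd X * \<bar>y\<bar>) ^ n)" by (rule summable_exp)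
  show "\<exists>N. \<forall>n\<ge>N. norm (mpow X n $ i $ j / fact n * y ^ n) \<le> inverse (fact n) * (3 * bnd X * \<bar>y\<bar>) ^ n"
  proof (intro exI allI impI)
    fix n :: nat
    have b: "\<bar>mpow X n $ i $ j\<bar> \<le> (3 * bnd X)^n" by (rule mpow_bound[OF bnd_ge])
    have "norm (mpow X n $ i $ j / fact n * y ^ n) = inverse (fact n) * (\<bar>mpow X n $ i $ j\<bar> * \<bar>y\<bar>^n)"
      by (simp add: abs_mult power_abs divide_inverse)
    also have "\<dots> \<le> inverse (fact n) * ((3 * bnd X)^n * \<bar>y\<bar>^n)"
      by (intro mult_left_mono mult_right_mono b) auto
    also have "\<dots> = inverse (fact n) * (3 * bnd X * \<bar>y\<bar>) ^ n" by (simp add: power_mult_distrib)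
    finally show "norm (mpow X n $ i $ j / fact n * y ^ n) \<le> inverse (fact n) * (3 * bnd X * \<bar>y\<bar>) ^ n" .
  qed
qed

lemma vec_sums:
  fixes f :: "nat \<Rightarrow> mat3"
  assumes "\<And>i j. (\<lambda>n. f n $ i $ j) sums (S $ i $ j)"
  shows "f sums S"
  unfolding sums_def
proof (rule vec_tendstoI)
  fix i
  show "((\<lambda>n. sum f {..<n} $ i) \<longlongrightarrow> S $ i) sequentially"
  proof (rule vec_tendstoI)
    fix j
    show "((\<lambda>n. sum f {..<n} $ i $ j) \<longlongrightarrow> S $ i $ j) sequentially"
      using assms[of i j] unfolding sums_def by (simp add: sum_component)
  qed
qed

lemma mexp_sums: "(\<lambda>n. (1 / fact n) *\<^sub>R mpow A n) sums (\<chi> i j. \<Sum>n. mpow A n $ i $ j / fact n)"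
proof (rule vec_sums)
  fix i j
  have "summable (\<lambda>n. (mpow A n $ i $ j / fact n) * 1 ^ n)" by (rule coef_summable)
  then show "(\<lambda>n. ((1 / fact n) *\<^sub>R mpow A n) $ i $ j) sums ((\<chi> i j. \<Sum>n. mpow A n $ i $ j / fact n) $ i $ j)"
    by (simp add: summable_sums)
qed

lemma mexp_entry: "mexp A $ i $ j = (\<Sum>n. mpow A n $ i $ j / fact n)"
  unfolding mexp_def sums_unique[OF mexp_sums[of A], symmetric] by simp

lemma mexp_tX_entry: "mexp (t *\<^sub>R X) $ i $ j = (\<Sum>n. (mpow X n $ i $ j / fact n) * t ^ n)"
  unfolding mexp_entry mpow_scale by (simp add: algebra_simps)

lemma mexp_deriv: "((\<lambda>t. mexp (t *\<^sub>R X) $ i $ j) has_real_derivative X $ i $ j) (at 0)"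
proof -
  have "((\<lambda>t. \<Sum>n. (mpow X n $ i $ j / fact n) * t ^ n) has_real_derivative
      (\<Sum>n. diffs (\<lambda>n. mpow X n $ i $ j / fact n) n * 0 ^ n)) (at 0)"
    by (rule termdiffs_strong_converges_everywhere) (rule coef_summable)
  moreover have "(\<Sum>n. diffs (\<lambda>n. mpow X n $ i $ j / fact n) n * 0 ^ n) = X $ i $ j"
    unfolding powser_zero diffs_def by simp
  ultimately show ?thesis unfolding mexp_tX_entry by simp
qed

lemma mexp_zero_entry: "mexp (0 *\<^sub>R X) $ i $ j = mat 1 $ i $ j"
  unfolding mexp_tX_entry powser_zero by (simp add: mat_def)

lemma mexp_at0: "mexp (0 *\<^sub>R X) = mat 1"
  using mexp_zero_entry by (simp add: vec_eq_iff)

lemma mexp_nil: assumes "A ** A = 0" shows "mexp A = mat 1 + A"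
proof -
  have z: "mpow A n = 0" if "n \<ge> 2" for n
  proof -
    obtain k where "n = Suc (Suc k)" using \<open>n \<ge> 2\<close> by (metis add_2_eq_Suc le_Suc_ex)
    then show ?thesis using assms by (simp add: matrix_mul_assoc)
  qed
  have "(\<lambda>n. (1 / fact n) *\<^sub>R mpow A n) sums (\<Sum>n\<in>{0,1}. (1 / fact n) *\<^sub>R mpow A n)"
    by (rule sums_finite) (use z in auto)
  then show ?thesis unfolding mexp_def by (simp add: sums_unique[symmetric])
qed

lemma mpow_diag: "mpow (mat3 a 0 0 0 b 0 0 0 c) n = mat3 (a^n) 0 0 0 (b^n) 0 0 0 (c^n)"
  by (induction n) (simp_all add: mat1_mat3)

lemma exp_sums': "(\<lambda>n. 1 / fact n * x ^ n) sums exp (x::real)"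
  using exp_converges[of x] by (simp add: divide_inverse mult.commute)

lemma mexp_diag: "mexp (mat3 a 0 0 0 b 0 0 0 c) = mat3 (exp a) 0 0 0 (exp b) 0 0 0 (exp c)"
proof -
  have "(\<lambda>n. (1 / fact n) *\<^sub>R mpow (mat3 a 0 0 0 b 0 0 0 c) n) sums mat3 (exp a) 0 0 0 (exp b) 0 0 0 (exp c)"
  proof (rule vec_sums)
    fix i j :: 3
    show "(\<lambda>n. ((1 / fact n) *\<^sub>R mpow (mat3 a 0 0 0 b 0 0 0 c) n) $ i $ j) sums (mat3 (exp a) 0 0 0 (exp b) 0 0 0 (exp c) $ i $ j)"
      unfolding mpow_diag
      using exhaust_3[of i] exhaust_3[of j] exp_sums'[of a] exp_sums'[of b] exp_sums'[of c]
      by (auto simp: sums_0)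
  qed
  then show ?thesis unfolding mexp_def by (simp add: sums_unique[symmetric])
qed



lemma group_dim_eq:
  assumes "B \<subseteq> lie_alg H" "lie_alg H \<subseteq> span B" "independent B"
  shows "group_dim H = card B"
proof -
  have "span (lie_alg H) = span B"
    using assms(1,2) by (metis span_mono span_span subset_antisym)
  then have "dim (lie_alg H) = dim B" by (metis dim_span)
  then show ?thesis unfolding group_dim_def using dim_eq_card_independent[OF assms(3)] by simp
qed

lemma inner_mat3 [simp]: "mat3 a b c d e f g h i \<bullet> mat3 a' b' c' d' e' f' g' h' i' =
  a*a' + b*b' + c*c' + d*d' + e*e' + f*f' + g*g' + h*h' + i*i'"
  by (simp add: inner_vec_def sum_3 mat3_def)

lemma lie_alg_iff: "X \<in> lie_alg H \<longleftrightarrow> (\<forall>t. mexp (t *\<^sub>R X) \<in> H)"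
  by (simp add: lie_alg_def)

lemma mexp_0 [simp]: "mexp 0 = mat 1"
  using mexp_at0[of 0] by simp

lemma deriv_zero:
  assumes "\<And>t. mexp (t *\<^sub>R X) $ i $ j = 0" shows "X $ i $ j = 0"
proof -
  have "((\<lambda>t. mexp (t *\<^sub>R X) $ i $ j) has_real_derivative 0) (at 0)"
    using assms by simp
  then show ?thesis using DERIV_unique mexp_deriv by blast
qed

lemma deriv_eq:
  assumes "\<And>t. mexp (t *\<^sub>R X) $ i $ j = mexp (t *\<^sub>R X) $ k $ l" shows "X $ i $ j = X $ k $ l"
proof -
  have "((\<lambda>t. mexp (t *\<^sub>R X) $ i $ j) has_real_derivative X $ k $ l) (at 0)"
    using assms mexp_deriv[of X k l] by simp
  then show ?thesis using DERIV_unique mexp_deriv by blast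
qed

lemma deriv_mono3:
  fixes p q r :: nat
  assumes "\<And>t. (mexp (t *\<^sub>R X) $ 1 $ 1)^p * (mexp (t *\<^sub>R X) $ 2 $ 2)^q * (mexp (t *\<^sub>R X) $ 3 $ 3)^r = 1"
  shows "real p * X$1$1 + real q * X$2$2 + real r * X$3$3 = 0"
proof -
  have "((\<lambda>t. (mexp (t *\<^sub>R X) $ 1 $ 1)^p * (mexp (t *\<^sub>R X) $ 2 $ 2)^q * (mexp (t *\<^sub>R X) $ 3 $ 3)^r)
      has_real_derivative (real p * X$1$1 + real q * X$2$2 + real r * X$3$3)) (at 0)"
    by (rule derivative_eq_intros mexp_deriv refl)+ (simp add: mat_def algebra_simps)
  moreover have "((\<lambda>t. (mexp (t *\<^sub>R X) $ 1 $ 1)^p * (mexp (t *\<^sub>R X) $ 2 $ 2)^q * (mexp (t *\<^sub>R X) $ 3 $ 3)^r)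
      has_real_derivative 0) (at 0)"
    using assms by simp
  ultimately show ?thesis using DERIV_unique by blast
qed

lemma deriv_det:
  assumes "\<And>t. det (mexp (t *\<^sub>R X)) = 1"
  shows "X$1$1 + X$2$2 + X$3$3 = 0"
proof -
  have "((\<lambda>t. det (mexp (t *\<^sub>R X))) has_real_derivative (X$1$1 + X$2$2 + X$3$3)) (at 0)"
    unfolding det_3
    by (rule derivative_eq_intros mexp_deriv refl)+ (simp add: mat_def algebra_simps)
  moreover have "((\<lambda>t. det (mexp (t *\<^sub>R X))) has_real_derivative 0) (at 0)"
    using assms by simp
  ultimately show ?thesis using DERIV_unique by blast
qed

lemma exp_m2: "exp (-(2*t)) = 1 / (exp (t::real))^2"
  using exp_of_nat_mult[of 2 t] by (simp add: exp_minus field_simps)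

lemma exp_cancel2: "exp (t::real) * exp t * exp (-(2*t)) = 1"
  by (simp add: exp_m2 power2_eq_square)

lemma mexp_nil_t: "A ** A = 0 \<Longrightarrow> mexp (t *\<^sub>R A) = mat 1 + t *\<^sub>R A"
  by (rule mexp_nil) (simp add: matrix_scalar_ac scalar_matrix_assoc[symmetric])



abbreviation "E12 \<equiv> mat3 0 1 0 0 0 0 0 0 0"
abbreviation "E13 \<equiv> mat3 0 0 1 0 0 0 0 0 0"
abbreviation "E21 \<equiv> mat3 0 0 0 1 0 0 0 0 0"
abbreviation "E23 \<equiv> mat3 0 0 0 0 0 1 0 0 0"
abbreviation "E31 \<equiv> mat3 0 0 0 0 0 0 1 0 0"
abbreviation "E32 \<equiv> mat3 0 0 0 0 0 0 0 1 0"
abbreviation "D1 \<equiv> mat3 1 0 0 0 (-1) 0 0 0 0"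
abbreviation "D2 \<equiv> mat3 1 0 0 0 1 0 0 0 (-2)"

lemma mexp_E12: "mexp (t *\<^sub>R E12) = mat3 1 t 0 0 1 0 0 0 1"
  by (subst mexp_nil_t) (simp_all add: zero_mat3 mat1_mat3)
lemma mexp_E13: "mexp (t *\<^sub>R E13) = mat3 1 0 t 0 1 0 0 0 1"
  by (subst mexp_nil_t) (simp_all add: zero_mat3 mat1_mat3)
lemma mexp_E21: "mexp (t *\<^sub>R E21) = mat3 1 0 0 t 1 0 0 0 1"
  by (subst mexp_nil_t) (simp_all add: zero_mat3 mat1_mat3)
lemma mexp_E23: "mexp (t *\<^sub>R E23) = mat3 1 0 0 0 1 t 0 0 1"
  by (subst mexp_nil_t) (simp_all add: zero_mat3 mat1_mat3)
lemma mexp_E31: "mexp (t *\<^sub>R E31) = mat3 1 0 0 0 1 0 t 0 1"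
  by (subst mexp_nil_t) (simp_all add: zero_mat3 mat1_mat3)
lemma mexp_E32: "mexp (t *\<^sub>R E32) = mat3 1 0 0 0 1 0 0 t 1"
  by (subst mexp_nil_t) (simp_all add: zero_mat3 mat1_mat3)

lemma mexp_diag_t: "mexp (t *\<^sub>R mat3 a 0 0 0 b 0 0 0 c) = mat3 (exp (t*a)) 0 0 0 (exp (t*b)) 0 0 0 (exp (t*c))"
  using mexp_diag[of "t*a" "t*b" "t*c"] by simp

lemma SL3_lie_sub: "lie_alg SL3 \<subseteq> span {E12, E13, E21, E23, E31, E32, D1, D2}"
proof
  fix X assume "X \<in> lie_alg SL3"
  then have "\<And>t. det (mexp (t *\<^sub>R X)) = 1" by (simp add: lie_alg_iff SL3_def)
  then have tr: "X$1$1 + X$2$2 + X$3$3 = 0" by (rule deriv_det)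
  have "X = (X$1$2) *\<^sub>R E12 + (X$1$3) *\<^sub>R E13 + (X$2$1) *\<^sub>R E21 + (X$2$3) *\<^sub>R E23
      + (X$3$1) *\<^sub>R E31 + (X$3$2) *\<^sub>R E32 + (X$1$1 + X$3$3/2) *\<^sub>R D1 + (- X$3$3/2) *\<^sub>R D2"
    apply (subst mat3_eta[of X]) using tr by simp
  also have "\<dots> \<in> span {E12, E13, E21, E23, E31, E32, D1, D2}"
    by (intro span_add span_scale span_base) auto
  finally show "X \<in> span {E12, E13, E21, E23, E31, E32, D1, D2}" .
qed

lemma SL3_lie_basis: "{E12, E13, E21, E23, E31, E32, D1, D2} \<subseteq> lie_alg SL3"
  apply (simp only: insert_subset empty_subsetI lie_alg_iff SL3_def mem_Collect_eq
      mexp_E12 mexp_E13 mexp_E21 mexp_E23 mexp_E31 mexp_E32 mexp_diag_t)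
  apply (simp add: exp_cancel2 flip: exp_add)
  done

lemma SL3_indep: "independent {E12, E13, E21, E23, E31, E32, D1, D2}"
  by (rule pairwise_orthogonal_independent) (auto simp: pairwise_insert orthogonal_def zero_mat3)

lemma group_dim_SL3: "group_dim SL3 = 8"
  using group_dim_eq[OF SL3_lie_basis SL3_lie_sub SL3_indep] by simp



lemma exp_m2': "exp (-(t*2)) = 1 / (exp (t::real))^2"
  using exp_m2[of t] by (simp add: mult.commute)

abbreviation "Dm \<equiv> mat3 (-2) 0 0 0 1 0 0 0 1"
abbreviation "Dm2 \<equiv> mat3 1 0 0 0 (-2) 0 0 0 1"

definition H1set :: "mat3 set" where "H1set = {dmat (1 / a^2) a a | a. a \<noteq> 0}"
definition H2set :: "mat3 set" where "H2set = {mat3 a z 0 0 (1 / a^2) 0 0 0 a | a z. a \<noteq> 0}"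
definition U1set :: "mat3 set" where "U1set = {mat3 (1 / a^2) x 0 0 a 0 0 0 a | a x. a \<noteq> 0}"
definition H3e :: "mat3 set" where
  "H3e = {A. det A = 1 \<and> A$1$3 = 0 \<and> A$2$1 = 0 \<and> A$2$3 = 0 \<and> A$3$1 = 0 \<and> A$3$2 = 0}"

lemma H3_eq: "setmul Dgrp {nmat x 0 0 | x. True} = H3e"
proof
  show "setmul Dgrp {nmat x 0 0 |x. True} \<subseteq> H3e"
  proof
    fix A assume "A \<in> setmul Dgrp {nmat x 0 0 |x. True}"
    then obtain d x where d: "d \<in> Dgrp" and A: "A = d ** nmat x 0 0" unfolding setmul_def by blast
    obtain a b c e f g h i k where dd: "d = mat3 a b c e f g h i k" by (rule mat3_cases)
    have z: "b = 0 \<and> c = 0 \<and> e = 0 \<and> g = 0 \<and> h = 0 \<and> i = 0" using d unfolding dd Dgrp_def SL3_def by simp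
    have dt: "a*f*k = 1" using d z unfolding dd Dgrp_def SL3_def by simp
    show "A \<in> H3e" using z dt unfolding A dd H3e_def nmat_def by simp
  qed
  show "H3e \<subseteq> setmul Dgrp {nmat x 0 0 |x. True}"
  proof
    fix A assume A: "A \<in> H3e"
    obtain a b c e f g h i k where AA: "A = mat3 a b c e f g h i k" by (rule mat3_cases)
    have h: "a * f * k = 1" "c = 0" "e = 0" "g = 0" "h = 0" "i = 0" using A unfolding H3e_def AA by auto
    then have a0: "a \<noteq> 0" by auto
    have "A = mat3 a 0 0 0 f 0 0 0 k ** nmat (b / a) 0 0" using h a0 unfolding AA nmat_def by simp
    moreover have "mat3 a 0 0 0 f 0 0 0 k \<in> Dgrp" using h unfolding Dgrp_def SL3_def by simp
    ultimately show "A \<in> setmul Dgrp {nmat x 0 0 |x. True}" unfolding setmul_def by blast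
  qed
qed

lemma lie_prop: assumes "X \<in> lie_alg H" "\<And>A. A \<in> H \<Longrightarrow> Q A" shows "Q (mexp (t *\<^sub>R X))"
  using assms by (simp add: lie_alg_iff)

lemma H1_prop: assumes "A \<in> H1set"
  shows "A$1$2 = 0 \<and> A$1$3 = 0 \<and> A$2$1 = 0 \<and> A$2$3 = 0 \<and> A$3$1 = 0 \<and> A$3$2 = 0 \<and> A$2$2 = A$3$3 \<and>
     (A$1$1)^1 * (A$2$2)^2 * (A$3$3)^0 = 1"
proof -
  obtain a where a: "A = dmat (1/a^2) a a" "a \<noteq> 0" using assms unfolding H1set_def by blast
  show ?thesis using a(2) unfolding a(1) dmat_def by simp
qed

lemma dim_H1: "group_dim H1set = 1"
proof -
  have sub: "{Dm} \<subseteq> lie_alg H1set"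
  proof -
    have "mexp (t *\<^sub>R Dm) \<in> H1set" for t
      unfolding H1set_def
      by (simp only: mexp_diag_t, rule CollectI, rule exI[of _ "exp t"]) (simp add: dmat_def exp_m2')
    then show ?thesis by (simp add: lie_alg_iff)
  qed
  have span: "lie_alg H1set \<subseteq> span {Dm}"
  proof
    fix X assume X: "X \<in> lie_alg H1set"
    have "mexp (t *\<^sub>R X) \<in> H1set" for t using X by (simp add: lie_alg_iff)
    note e = H1_prop[OF this]
    have x: "X$1$2 = 0" "X$1$3 = 0" "X$2$1 = 0" "X$2$3 = 0" "X$3$1 = 0" "X$3$2 = 0"
      by (rule deriv_zero, use e in blast)+
    have y: "X$2$2 = X$3$3" by (rule deriv_eq, use e in blast)
    have z: "real 1 * X$1$1 + real 2 * X$2$2 + real 0 * X$3$3 = 0" by (rule deriv_mono3, use e in blast)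
    have "X = (X$2$2) *\<^sub>R Dm" using x y z by (subst mat3_eta[of X]) simp
    then show "X \<in> span {Dm}" by (metis span_base span_scale insertI1)
  qed
  have ind: "independent {Dm}" by (rule pairwise_orthogonal_independent) (auto simp: zero_mat3)
  show ?thesis using group_dim_eq[OF sub span ind] by simp
qed


lemma H2_prop: assumes "A \<in> H2set"
  shows "A$1$3 = 0 \<and> A$2$1 = 0 \<and> A$2$3 = 0 \<and> A$3$1 = 0 \<and> A$3$2 = 0 \<and> A$1$1 = A$3$3 \<and>
     (A$1$1)^2 * (A$2$2)^1 * (A$3$3)^0 = 1"
proof -
  obtain a z where a: "A = mat3 a z 0 0 (1 / a^2) 0 0 0 a" "a \<noteq> 0" using assms unfolding H2set_def by blast
  show ?thesis using a(2) unfolding a(1) by simp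
qed

lemma dim_H2: "group_dim H2set = 2"
proof -
  have sub: "{E12, Dm2} \<subseteq> lie_alg H2set"
  proof -
    have "mexp (t *\<^sub>R Dm2) \<in> H2set" for t
      unfolding H2set_def
      by (simp only: mexp_diag_t, rule CollectI, rule exI[of _ "exp t"], rule exI[of _ 0]) (simp add: exp_m2')
    moreover have "mexp (t *\<^sub>R E12) \<in> H2set" for t
      unfolding H2set_def mexp_E12
      by (rule CollectI, rule exI[of _ 1], rule exI[of _ t]) simp
    ultimately show ?thesis by (simp add: lie_alg_iff)
  qed
  have span: "lie_alg H2set \<subseteq> span {E12, Dm2}"
  proof
    fix X assume X: "X \<in> lie_alg H2set"
    have "mexp (t *\<^sub>R X) \<in> H2set" for t using X by (simp add: lie_alg_iff)
    note e = H2_prop[OF this]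
    have x: "X$1$3 = 0" "X$2$1 = 0" "X$2$3 = 0" "X$3$1 = 0" "X$3$2 = 0"
      by (rule deriv_zero, use e in blast)+
    have y: "X$1$1 = X$3$3" by (rule deriv_eq, use e in blast)
    have z: "real 2 * X$1$1 + real 1 * X$2$2 + real 0 * X$3$3 = 0" by (rule deriv_mono3, use e in blast)
    have "X = (X$1$2) *\<^sub>R E12 + (X$1$1) *\<^sub>R Dm2" using x y z by (subst mat3_eta[of X]) simp
    also have "\<dots> \<in> span {E12, Dm2}" by (intro span_add span_scale span_base) auto
    finally show "X \<in> span {E12, Dm2}" .
  qed
  have ind: "independent {E12, Dm2}"
    by (rule pairwise_orthogonal_independent) (auto simp: zero_mat3 pairwise_insert orthogonal_def)
  show ?thesis using group_dim_eq[OF sub span ind] by simp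
qed

lemma U1_prop: assumes "A \<in> U1set"
  shows "A$1$3 = 0 \<and> A$2$1 = 0 \<and> A$2$3 = 0 \<and> A$3$1 = 0 \<and> A$3$2 = 0 \<and> A$2$2 = A$3$3 \<and>
     (A$1$1)^1 * (A$2$2)^2 * (A$3$3)^0 = 1"
proof -
  obtain a z where a: "A = mat3 (1 / a^2) z 0 0 a 0 0 0 a" "a \<noteq> 0" using assms unfolding U1set_def by blast
  show ?thesis using a(2) unfolding a(1) by simp
qed

lemma dim_U1: "group_dim U1set = 2"
proof -
  have sub: "{E12, Dm} \<subseteq> lie_alg U1set"
  proof -
    have "mexp (t *\<^sub>R Dm) \<in> U1set" for t
      unfolding U1set_def
      by (simp only: mexp_diag_t, rule CollectI, rule exI[of _ "exp t"], rule exI[of _ 0]) (simp add: exp_m2')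
    moreover have "mexp (t *\<^sub>R E12) \<in> U1set" for t
      unfolding U1set_def mexp_E12
      by (rule CollectI, rule exI[of _ 1], rule exI[of _ t]) simp
    ultimately show ?thesis by (simp add: lie_alg_iff)
  qed
  have span: "lie_alg U1set \<subseteq> span {E12, Dm}"
  proof
    fix X assume X: "X \<in> lie_alg U1set"
    have "mexp (t *\<^sub>R X) \<in> U1set" for t using X by (simp add: lie_alg_iff)
    note e = U1_prop[OF this]
    have x: "X$1$3 = 0" "X$2$1 = 0" "X$2$3 = 0" "X$3$1 = 0" "X$3$2 = 0"
      by (rule deriv_zero, use e in blast)+
    have y: "X$2$2 = X$3$3" by (rule deriv_eq, use e in blast)
    have z: "real 1 * X$1$1 + real 2 * X$2$2 + real 0 * X$3$3 = 0" by (rule deriv_mono3, use e in blast)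
    have "X = (X$1$2) *\<^sub>R E12 + (X$2$2) *\<^sub>R Dm" using x y z by (subst mat3_eta[of X]) simp
    also have "\<dots> \<in> span {E12, Dm}" by (intro span_add span_scale span_base) auto
    finally show "X \<in> span {E12, Dm}" .
  qed
  have ind: "independent {E12, Dm}"
    by (rule pairwise_orthogonal_independent) (auto simp: zero_mat3 pairwise_insert orthogonal_def)
  show ?thesis using group_dim_eq[OF sub span ind] by simp
qed

lemma D_prop: assumes "A \<in> Dgrp"
  shows "A$1$2 = 0 \<and> A$1$3 = 0 \<and> A$2$1 = 0 \<and> A$2$3 = 0 \<and> A$3$1 = 0 \<and> A$3$2 = 0 \<and>
     (A$1$1)^1 * (A$2$2)^1 * (A$3$3)^1 = 1"
proof -
  have z: "A$1$2 = 0 \<and> A$1$3 = 0 \<and> A$2$1 = 0 \<and> A$2$3 = 0 \<and> A$3$1 = 0 \<and> A$3$2 = 0"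
    using assms unfolding Dgrp_def by simp
  have d: "det A = 1" using assms unfolding Dgrp_def SL3_def by simp
  show ?thesis using z d unfolding det_3 by simp
qed

lemma dim_D: "group_dim Dgrp = 2"
proof -
  have sub: "{D1, D2} \<subseteq> lie_alg Dgrp"
    apply (simp only: insert_subset empty_subsetI lie_alg_iff mexp_diag_t)
    apply (simp add: Dgrp_def SL3_def exp_cancel2 flip: exp_add)
    done
  have span: "lie_alg Dgrp \<subseteq> span {D1, D2}"
  proof
    fix X assume X: "X \<in> lie_alg Dgrp"
    have "mexp (t *\<^sub>R X) \<in> Dgrp" for t using X by (simp add: lie_alg_iff)
    note e = D_prop[OF this]
    have x: "X$1$2 = 0" "X$1$3 = 0" "X$2$1 = 0" "X$2$3 = 0" "X$3$1 = 0" "X$3$2 = 0"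
      by (rule deriv_zero, use e in blast)+
    have z: "real 1 * X$1$1 + real 1 * X$2$2 + real 1 * X$3$3 = 0" by (rule deriv_mono3, use e in blast)
    have "X = (X$1$1 + X$3$3/2) *\<^sub>R D1 + (- X$3$3/2) *\<^sub>R D2" using x z by (subst mat3_eta[of X]) simp
    also have "\<dots> \<in> span {D1, D2}" by (intro span_add span_scale span_base) auto
    finally show "X \<in> span {D1, D2}" .
  qed
  have ind: "independent {D1, D2}"
    by (rule pairwise_orthogonal_independent) (auto simp: zero_mat3 pairwise_insert orthogonal_def)
  show ?thesis using group_dim_eq[OF sub span ind] by simp
qed

lemma H3_prop: assumes "A \<in> H3e"
  shows "A$1$3 = 0 \<and> A$2$1 = 0 \<and> A$2$3 = 0 \<and> A$3$1 = 0 \<and> A$3$2 = 0 \<and>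
     (A$1$1)^1 * (A$2$2)^1 * (A$3$3)^1 = 1"
proof -
  have z: "A$1$3 = 0 \<and> A$2$1 = 0 \<and> A$2$3 = 0 \<and> A$3$1 = 0 \<and> A$3$2 = 0"
    using assms unfolding H3e_def by simp
  have d: "det A = 1" using assms unfolding H3e_def by simp
  show ?thesis using z d unfolding det_3 by simp
qed

lemma dim_H3: "group_dim H3e = 3"
proof -
  have sub: "{E12, D1, D2} \<subseteq> lie_alg H3e"
    apply (simp only: insert_subset empty_subsetI lie_alg_iff mexp_diag_t mexp_E12)
    apply (simp add: H3e_def exp_cancel2 flip: exp_add)
    done
  have span: "lie_alg H3e \<subseteq> span {E12, D1, D2}"
  proof
    fix X assume X: "X \<in> lie_alg H3e"
    have "mexp (t *\<^sub>R X) \<in> H3e" for t using X by (simp add: lie_alg_iff)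
    note e = H3_prop[OF this]
    have x: "X$1$3 = 0" "X$2$1 = 0" "X$2$3 = 0" "X$3$1 = 0" "X$3$2 = 0"
      by (rule deriv_zero, use e in blast)+
    have z: "real 1 * X$1$1 + real 1 * X$2$2 + real 1 * X$3$3 = 0" by (rule deriv_mono3, use e in blast)
    have "X = (X$1$2) *\<^sub>R E12 + (X$1$1 + X$3$3/2) *\<^sub>R D1 + (- X$3$3/2) *\<^sub>R D2"
      using x z by (subst mat3_eta[of X]) simp
    also have "\<dots> \<in> span {E12, D1, D2}" by (intro span_add span_scale span_base) auto
    finally show "X \<in> span {E12, D1, D2}" .
  qed
  have ind: "independent {E12, D1, D2}"
    by (rule pairwise_orthogonal_independent) (auto simp: zero_mat3 pairwise_insert orthogonal_def)
  show ?thesis using group_dim_eq[OF sub span ind] by simp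
qed



definition lz :: "mat3 \<Rightarrow> bool" where "lz M \<longleftrightarrow> M$2$1 = 0 \<and> M$3$1 = 0 \<and> M$3$2 = 0"

lemma lz_mat3 [simp]: "lz (mat3 a b c d e f g h i) \<longleftrightarrow> d = 0 \<and> g = 0 \<and> h = 0"
  by (simp add: lz_def)

lemma conj_P: assumes "det v = 1" "det g = 1" shows "v ** g ** inv3 v \<in> Pgrp \<longleftrightarrow> lz (v ** g ** inv3 v)"
  using assms by (simp add: P_iff lz_def det_mul det_inv3)

lemma stab_iff2:
  assumes "det v = 1" "det w = 1"
  shows "g \<in> stab (coset (mat 1), coset v, coset w) \<longleftrightarrow>
     g \<in> Pgrp \<and> lz (v ** g ** inv3 v) \<and> lz (w ** g ** inv3 w)"
  using stab_iff[OF assms] conj_P[OF assms(1)] conj_P[OF assms(2)] P_det by blast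

lemma det_z2: "det z2 = 1" by (simp add: z2_def)
lemma det_s1: "det s1 = 1" by (simp add: s1_def)
lemma det_s2: "det s2 = 1" by (simp add: s2_def)
lemma det_n: "det (nmat x y z) = 1" by (simp add: nmat_def)
lemma n_P: "nmat x y z \<in> Pgrp" by (simp add: nmat_def P_iff)

lemma P_mat3: "mat3 a b c d e f h i k \<in> Pgrp \<longleftrightarrow> d = 0 \<and> h = 0 \<and> i = 0 \<and> a*e*k = 1"
  unfolding P_iff by auto

lemma det_zn: "det (z2 ** nmat x y z) = 1" by (simp add: det_mul det_z2 det_n)
lemma det_sn: "det (s2 ** nmat x y z) = 1" by (simp add: det_mul det_s2 det_n)
lemma det_one: "det (mat 1 :: mat3) = 1" by simp

lemma stab_x1: "stab (coset (mat 1), coset z2, coset (z2 ** nmat 0 0 1)) = H1set"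
proof
  show "stab (coset (mat 1), coset z2, coset (z2 ** nmat 0 0 1)) \<subseteq> H1set"
  proof
    fix g assume "g \<in> stab (coset (mat 1), coset z2, coset (z2 ** nmat 0 0 1))"
    then have c: "g \<in> Pgrp" "lz (z2 ** g ** inv3 z2)" "lz (z2 ** nmat 0 0 1 ** g ** inv3 (z2 ** nmat 0 0 1))"
      using stab_iff2[OF det_z2 det_zn] by auto
    obtain a b c d e f h i k where G: "g = mat3 a b c d e f h i k" by (rule mat3_cases)
    have z: "d = 0" "h = 0" "i = 0" "a*e*k = 1" using c(1) unfolding G P_mat3 by auto
    have w: "c = 0" "f = 0" "b = 0" "e = k" using c(2,3) unfolding G z(1-3) by (simp_all add: z2_def nmat_def)
    have e0: "e \<noteq> 0" using z(4) by auto
    have "a = 1 / e^2" using z(4) w(4) e0 by (simp add: field_simps power2_eq_square)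
    then have "g = dmat (1 / e^2) e e" unfolding G dmat_def using z w by simp
    then show "g \<in> H1set" unfolding H1set_def using e0 by blast
  qed
  show "H1set \<subseteq> stab (coset (mat 1), coset z2, coset (z2 ** nmat 0 0 1))"
  proof
    fix g assume "g \<in> H1set"
    then obtain a where g: "g = dmat (1/a^2) a a" "a \<noteq> 0" unfolding H1set_def by blast
    show "g \<in> stab (coset (mat 1), coset z2, coset (z2 ** nmat 0 0 1))"
      unfolding stab_iff2[OF det_z2 det_zn] g(1) dmat_def P_mat3 using g(2)
      by (simp add: z2_def nmat_def power2_eq_square)
  qed
qed


lemma stab_x3: "stab (coset (mat 1), coset z2, coset (z2 ** nmat 0 0 0)) = H3e"
proof
  show "stab (coset (mat 1), coset z2, coset (z2 ** nmat 0 0 0)) \<subseteq> H3e"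
  proof
    fix g assume "g \<in> stab (coset (mat 1), coset z2, coset (z2 ** nmat 0 0 0))"
    then have c: "g \<in> Pgrp" "lz (z2 ** g ** inv3 z2)" "lz ((z2 ** nmat 0 0 0) ** g ** inv3 (z2 ** nmat 0 0 0))"
      using stab_iff2[OF det_z2 det_zn] by auto
    obtain a b c d e f h i k where G: "g = mat3 a b c d e f h i k" by (rule mat3_cases)
    have z: "d = 0" "h = 0" "i = 0" "a*e*k = 1" using c(1) unfolding G P_mat3 by auto
    have w: "c = 0" "f = 0" using c(2) unfolding G z(1-3) by (simp_all add: z2_def)
    show "g \<in> H3e" unfolding H3e_def G using z w by simp
  qed
  show "H3e \<subseteq> stab (coset (mat 1), coset z2, coset (z2 ** nmat 0 0 0))"
  proof
    fix g assume g: "g \<in> H3e"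
    obtain a b c d e f h i k where G: "g = mat3 a b c d e f h i k" by (rule mat3_cases)
    have z: "c = 0" "d = 0" "f = 0" "h = 0" "i = 0" using g unfolding H3e_def G by auto
    have dt: "a*e*k = 1" using g unfolding H3e_def G z by simp
    show "g \<in> stab (coset (mat 1), coset z2, coset (z2 ** nmat 0 0 0))"
      unfolding stab_iff2[OF det_z2 det_zn] G z P_mat3 using dt
      by (simp add: z2_def nmat_def mat1_mat3)
  qed
qed

lemma stab_y2: "stab (coset (mat 1), coset z2, coset (mat 1)) = H3e"
proof
  show "stab (coset (mat 1), coset z2, coset (mat 1)) \<subseteq> H3e"
  proof
    fix g assume "g \<in> stab (coset (mat 1), coset z2, coset (mat 1))"
    then have c: "g \<in> Pgrp" "lz (z2 ** g ** inv3 z2)" "lz ((mat 1) ** g ** inv3 (mat 1))"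
      using stab_iff2[OF det_z2 det_one] by auto
    obtain a b c d e f h i k where G: "g = mat3 a b c d e f h i k" by (rule mat3_cases)
    have z: "d = 0" "h = 0" "i = 0" "a*e*k = 1" using c(1) unfolding G P_mat3 by auto
    have w: "c = 0" "f = 0" using c(2) unfolding G z(1-3) by (simp_all add: z2_def)
    show "g \<in> H3e" unfolding H3e_def G using z w by simp
  qed
  show "H3e \<subseteq> stab (coset (mat 1), coset z2, coset (mat 1))"
  proof
    fix g assume g: "g \<in> H3e"
    obtain a b c d e f h i k where G: "g = mat3 a b c d e f h i k" by (rule mat3_cases)
    have z: "c = 0" "d = 0" "f = 0" "h = 0" "i = 0" using g unfolding H3e_def G by auto
    have dt: "a*e*k = 1" using g unfolding H3e_def G z by simp
    show "g \<in> stab (coset (mat 1), coset z2, coset (mat 1))"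
      unfolding stab_iff2[OF det_z2 det_one] G z P_mat3 using dt
      by (simp add: z2_def mat1_mat3)
  qed
qed

lemma stab_u2: "stab (coset (mat 1), coset z2, coset (s2 ** nmat 0 0 0)) = H3e"
proof
  show "stab (coset (mat 1), coset z2, coset (s2 ** nmat 0 0 0)) \<subseteq> H3e"
  proof
    fix g assume "g \<in> stab (coset (mat 1), coset z2, coset (s2 ** nmat 0 0 0))"
    then have c: "g \<in> Pgrp" "lz (z2 ** g ** inv3 z2)" "lz ((s2 ** nmat 0 0 0) ** g ** inv3 (s2 ** nmat 0 0 0))"
      using stab_iff2[OF det_z2 det_sn] by auto
    obtain a b c d e f h i k where G: "g = mat3 a b c d e f h i k" by (rule mat3_cases)
    have z: "d = 0" "h = 0" "i = 0" "a*e*k = 1" using c(1) unfolding G P_mat3 by auto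
    have w: "c = 0" "f = 0" using c(2) unfolding G z(1-3) by (simp_all add: z2_def)
    show "g \<in> H3e" unfolding H3e_def G using z w by simp
  qed
  show "H3e \<subseteq> stab (coset (mat 1), coset z2, coset (s2 ** nmat 0 0 0))"
  proof
    fix g assume g: "g \<in> H3e"
    obtain a b c d e f h i k where G: "g = mat3 a b c d e f h i k" by (rule mat3_cases)
    have z: "c = 0" "d = 0" "f = 0" "h = 0" "i = 0" using g unfolding H3e_def G by auto
    have dt: "a*e*k = 1" using g unfolding H3e_def G z by simp
    show "g \<in> stab (coset (mat 1), coset z2, coset (s2 ** nmat 0 0 0))"
      unfolding stab_iff2[OF det_z2 det_sn] G z P_mat3 using dt
      by (simp add: z2_def s2_def nmat_def mat1_mat3)
  qed
qed

lemma stab_x2: "stab (coset (mat 1), coset z2, coset (z2 ** nmat 0 1 0)) = H2set"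
proof
  show "stab (coset (mat 1), coset z2, coset (z2 ** nmat 0 1 0)) \<subseteq> H2set"
  proof
    fix g assume "g \<in> stab (coset (mat 1), coset z2, coset (z2 ** nmat 0 1 0))"
    then have c: "g \<in> Pgrp" "lz (z2 ** g ** inv3 z2)" "lz (z2 ** nmat 0 1 0 ** g ** inv3 (z2 ** nmat 0 1 0))"
      using stab_iff2[OF det_z2 det_zn] by auto
    obtain a b c d e f h i k where G: "g = mat3 a b c d e f h i k" by (rule mat3_cases)
    have z: "d = 0" "h = 0" "i = 0" "a*e*k = 1" using c(1) unfolding G P_mat3 by auto
    have w: "c = 0" "f = 0" "a = k" using c(2,3) unfolding G z(1-3) by (simp_all add: z2_def nmat_def)
    have a0: "a \<noteq> 0" using z(4) by auto
    have "e = 1 / a^2" using z(4) w(3) a0 by (simp add: field_simps power2_eq_square)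
    then have "g = mat3 a b 0 0 (1 / a^2) 0 0 0 a" unfolding G using z w by simp
    then show "g \<in> H2set" unfolding H2set_def using a0 by blast
  qed
  show "H2set \<subseteq> stab (coset (mat 1), coset z2, coset (z2 ** nmat 0 1 0))"
  proof
    fix g assume "g \<in> H2set"
    then obtain a b where g: "g = mat3 a b 0 0 (1 / a^2) 0 0 0 a" "a \<noteq> 0" unfolding H2set_def by blast
    show "g \<in> stab (coset (mat 1), coset z2, coset (z2 ** nmat 0 1 0))"
      unfolding stab_iff2[OF det_z2 det_zn] g(1) P_mat3 using g(2)
      by (simp add: z2_def nmat_def power2_eq_square)
  qed
qed

lemma stab_u1: "stab (coset (mat 1), coset z2, coset (s2 ** nmat 0 0 1)) = U1set"
proof
  show "stab (coset (mat 1), coset z2, coset (s2 ** nmat 0 0 1)) \<subseteq> U1set"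
  proof
    fix g assume "g \<in> stab (coset (mat 1), coset z2, coset (s2 ** nmat 0 0 1))"
    then have c: "g \<in> Pgrp" "lz (z2 ** g ** inv3 z2)" "lz (s2 ** nmat 0 0 1 ** g ** inv3 (s2 ** nmat 0 0 1))"
      using stab_iff2[OF det_z2 det_sn] by auto
    obtain a b c d e f h i k where G: "g = mat3 a b c d e f h i k" by (rule mat3_cases)
    have z: "d = 0" "h = 0" "i = 0" "a*e*k = 1" using c(1) unfolding G P_mat3 by auto
    have w: "c = 0" "f = 0" using c(2) unfolding G z(1-3) by (simp_all add: z2_def)
    have w2: "e = k" using c(3) unfolding G z(1-3) w by (simp add: s2_def nmat_def)
    have e0: "e \<noteq> 0" using z(4) by auto
    have "a = 1 / e^2" using z(4) w2 e0 by (simp add: field_simps power2_eq_square)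
    then have "g = mat3 (1 / e^2) b 0 0 e 0 0 0 e" unfolding G using z w w2 by simp
    then show "g \<in> U1set" unfolding U1set_def using e0 by blast
  qed
  show "U1set \<subseteq> stab (coset (mat 1), coset z2, coset (s2 ** nmat 0 0 1))"
  proof
    fix g assume "g \<in> U1set"
    then obtain a b where g: "g = mat3 (1 / a^2) b 0 0 a 0 0 0 a" "a \<noteq> 0" unfolding U1set_def by blast
    show "g \<in> stab (coset (mat 1), coset z2, coset (s2 ** nmat 0 0 1))"
      unfolding stab_iff2[OF det_z2 det_sn] g(1) P_mat3 using g(2)
      by (simp add: z2_def s2_def nmat_def power2_eq_square)
  qed
qed

lemma stab_y1: "stab (coset (mat 1), coset z2, coset s1) = Dgrp"
proof
  show "stab (coset (mat 1), coset z2, coset s1) \<subseteq> Dgrp"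
  proof
    fix g assume "g \<in> stab (coset (mat 1), coset z2, coset s1)"
    then have c: "g \<in> Pgrp" "lz (z2 ** g ** inv3 z2)" "lz (s1 ** g ** inv3 s1)"
      using stab_iff2[OF det_z2 det_s1] by auto
    obtain a b c d e f h i k where G: "g = mat3 a b c d e f h i k" by (rule mat3_cases)
    have z: "d = 0" "h = 0" "i = 0" "a*e*k = 1" using c(1) unfolding G P_mat3 by auto
    have w: "c = 0" "f = 0" "b = 0" using c(2,3) unfolding G z(1-3) by (simp_all add: z2_def s1_def)
    show "g \<in> Dgrp" unfolding Dgrp_def SL3_def G using z w by simp
  qed
  show "Dgrp \<subseteq> stab (coset (mat 1), coset z2, coset s1)"
  proof
    fix g assume g: "g \<in> Dgrp"
    obtain a b c d e f h i k where G: "g = mat3 a b c d e f h i k" by (rule mat3_cases)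
    have z: "b = 0" "c = 0" "d = 0" "f = 0" "h = 0" "i = 0" using g unfolding Dgrp_def G by auto
    have dt: "a*e*k = 1" using g unfolding Dgrp_def SL3_def G z by simp
    show "g \<in> stab (coset (mat 1), coset z2, coset s1)"
      unfolding stab_iff2[OF det_z2 det_s1] G z P_mat3 using dt
      by (simp add: z2_def s1_def)
  qed
qed



lemma act_eq:
  assumes "det v = 1" "det w = 1" "det w' = 1" "det k = 1" "lz k"
    "lz (v ** k ** inv3 v)" "lz (w ** k ** inv3 w')"
  shows "act (coset (mat 1), coset v, coset w) k = (coset (mat 1), coset v, coset w')"
proof -
  have "coset (mat 1 ** k) = coset (mat 1)"
    using coset_eq_iff[of "mat 1" k] assms(4,5) by (simp add: P_iff lz_def)
  moreover have "coset (v ** k) = coset v"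
    using coset_eq_iff[OF assms(1), of "v ** k"] assms(1,4,6) by (simp add: P_iff lz_def det_mul det_inv3)
  moreover have "coset (w ** k) = coset w'"
    using coset_eq_iff[OF assms(3), of "w ** k"] assms(2,3,4,7) by (simp add: P_iff lz_def det_mul det_inv3)
  ultimately show ?thesis by simp
qed

lemma disj_gen:
  assumes "det w' = 1"
    and "\<And>a b e k. a*e*k = 1 \<Longrightarrow> lz (w ** mat3 a b 0 0 e 0 0 0 k ** inv3 w') \<Longrightarrow> False"
  shows "orbit (coset (mat 1), coset z2, coset w) \<inter> orbit (coset (mat 1), coset z2, coset w') = {}"
proof (rule orbit_disj'[OF det_z2 assms(1)])
  fix g assume c: "g \<in> Pgrp" "z2 ** g ** inv3 z2 \<in> Pgrp" "w ** g ** inv3 w' \<in> Pgrp"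
  obtain a b c d e f h i k where G: "g = mat3 a b c d e f h i k" by (rule mat3_cases)
  have z: "d = 0" "h = 0" "i = 0" "a*e*k = 1" using c(1) unfolding G P_mat3 by auto
  have w: "c = 0" "f = 0" using c(2) unfolding G z(1-3) P_iff by (simp_all add: z2_def)
  have "lz (w ** mat3 a b 0 0 e 0 0 0 k ** inv3 w')" using c(3) unfolding G z(1-3) w P_iff lz_def by simp
  then show False using assms(2) z(4) by blast
qed

lemma disj_x12: "orbit (coset (mat 1), coset z2, coset (z2 ** nmat 0 0 1)) \<inter> orbit (coset (mat 1), coset z2, coset (z2 ** nmat 0 1 0)) = {}"
  by (rule disj_gen[OF det_zn]) (auto simp: z2_def nmat_def)
lemma disj_x13: "orbit (coset (mat 1), coset z2, coset (z2 ** nmat 0 0 1)) \<inter> orbit (coset (mat 1), coset z2, coset (z2 ** nmat 0 0 0)) = {}"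
  by (rule disj_gen[OF det_zn]) (auto simp: z2_def nmat_def)
lemma disj_x23: "orbit (coset (mat 1), coset z2, coset (z2 ** nmat 0 1 0)) \<inter> orbit (coset (mat 1), coset z2, coset (z2 ** nmat 0 0 0)) = {}"
  by (rule disj_gen[OF det_zn]) (auto simp: z2_def nmat_def)
lemma disj_u12: "orbit (coset (mat 1), coset z2, coset (s2 ** nmat 0 0 1)) \<inter> orbit (coset (mat 1), coset z2, coset (s2 ** nmat 0 0 0)) = {}"
  by (rule disj_gen[OF det_sn]) (auto simp: s2_def nmat_def)



lemma P_obtain: assumes "r \<in> Pgrp"
  obtains a b c e f k where "r = mat3 a b c 0 e f 0 0 k" "a*e*k = 1"
proof -
  obtain a b c d e f h i k where G: "r = mat3 a b c d e f h i k" by (rule mat3_cases)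
  have z: "d = 0" "h = 0" "i = 0" "a*e*k = 1" using assms unfolding G P_mat3 by auto
  show ?thesis using that G z by blast
qed

lemma core_zz:
  assumes "r \<in> Pgrp"
  shows "\<exists>x\<in>{(coset (mat 1), coset z2, coset (z2 ** nmat 0 0 1)), (coset (mat 1), coset z2, coset (z2 ** nmat 0 1 0)),
             (coset (mat 1), coset z2, coset (z2 ** nmat 0 0 0))}.
         \<exists>k\<in>SL3. act x k = (coset (mat 1), coset z2, coset (z2 ** r))"
proof -
  obtain a b c e f k where R: "r = mat3 a b c 0 e f 0 0 k" "a*e*k = 1" using P_obtain[OF assms] by blast
  have nz: "a \<noteq> 0" "e \<noteq> 0" "k \<noteq> 0" using R(2) by auto
  have dzr: "det (z2 ** r) = 1" using assms by (simp add: det_mul det_z2 P_det)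
  show ?thesis
  proof (cases "f = 0")
    case False
    define g where "g = mat3 (a*k/f) (b*k/f - c*e*k/f^2) 0 0 e 0 0 0 f"
    have dg: "det g = 1" unfolding g_def using R(2) False by (simp add: field_simps)
    have "act (coset (mat 1), coset z2, coset (z2 ** nmat 0 0 1)) g = (coset (mat 1), coset z2, coset (z2 ** r))"
      by (rule act_eq[OF det_z2 det_zn dzr dg])
         (use False nz R(2) in \<open>simp_all add: g_def R(1) z2_def nmat_def field_simps power2_eq_square\<close>)
    then show ?thesis using dg by (auto simp: SL3_def)
  next
    case f0: True
    show ?thesis
    proof (cases "c = 0")
      case False
      define g where "g = mat3 a b 0 0 (e*k/c) 0 0 0 c"
      have dg: "det g = 1" unfolding g_def using R(2) False by (simp add: field_simps)
      have "act (coset (mat 1), coset z2, coset (z2 ** nmat 0 1 0)) g = (coset (mat 1), coset z2, coset (z2 ** r))"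
        by (rule act_eq[OF det_z2 det_zn dzr dg])
           (use False f0 nz R(2) in \<open>simp_all add: g_def R(1) z2_def nmat_def field_simps power2_eq_square\<close>)
      then show ?thesis using dg by (auto simp: SL3_def)
    next
      case c0: True
      define g where "g = mat3 a b 0 0 e 0 0 0 k"
      have dg: "det g = 1" unfolding g_def using R(2) by simp
      have "act (coset (mat 1), coset z2, coset (z2 ** nmat 0 0 0)) g = (coset (mat 1), coset z2, coset (z2 ** r))"
        by (rule act_eq[OF det_z2 det_zn dzr dg])
           (use c0 f0 nz R(2) in \<open>simp_all add: g_def R(1) z2_def nmat_def field_simps power2_eq_square\<close>)
      then show ?thesis using dg by (auto simp: SL3_def)
    qed
  qed
qed


lemma core_zs1:
  assumes "r \<in> Pgrp"
  shows "\<exists>x\<in>{(coset (mat 1), coset z2, coset s1)}.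
         \<exists>k\<in>SL3. act x k = (coset (mat 1), coset z2, coset (s1 ** r))"
proof -
  obtain a b c e f k where R: "r = mat3 a b c 0 e f 0 0 k" "a*e*k = 1" using P_obtain[OF assms] by blast
  have nz: "a \<noteq> 0" "e \<noteq> 0" "k \<noteq> 0" using R(2) by auto
  have dzr: "det (s1 ** r) = 1" using assms by (simp add: det_mul det_s1 P_det)
  define g where "g = nmat (b/a) 0 0"
  have dg: "det g = 1" unfolding g_def by (rule det_n)
  have "act (coset (mat 1), coset z2, coset s1) g = (coset (mat 1), coset z2, coset (s1 ** r))"
    by (rule act_eq[OF det_z2 det_s1 dzr dg])
       (use nz R(2) in \<open>simp_all add: g_def R(1) z2_def s1_def nmat_def field_simps\<close>)
  then show ?thesis using dg by (auto simp: SL3_def)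
qed

lemma core_z1:
  assumes "r \<in> Pgrp"
  shows "\<exists>x\<in>{(coset (mat 1), coset z2, coset (mat 1))}.
         \<exists>k\<in>SL3. act x k = (coset (mat 1), coset z2, coset (mat 1 ** r))"
proof -
  have "act (coset (mat 1), coset z2, coset (mat 1)) (mat 1) = (coset (mat 1), coset z2, coset (mat 1 ** r))"
    using coset_mult[OF assms, of "mat 1"] by simp
  then show ?thesis using one_SL3 by blast
qed

lemma core_zs2:
  assumes "r \<in> Pgrp"
  shows "\<exists>x\<in>{(coset (mat 1), coset z2, coset (s2 ** nmat 0 0 1)), (coset (mat 1), coset z2, coset (s2 ** nmat 0 0 0))}.
         \<exists>k\<in>SL3. act x k = (coset (mat 1), coset z2, coset (s2 ** r))"
proof -
  obtain a b c e f k where R: "r = mat3 a b c 0 e f 0 0 k" "a*e*k = 1" using P_obtain[OF assms] by blast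
  have nz: "a \<noteq> 0" "e \<noteq> 0" "k \<noteq> 0" using R(2) by auto
  have dzr: "det (s2 ** r) = 1" using assms by (simp add: det_mul det_s2 P_det)
  show ?thesis
  proof (cases "f = 0")
    case False
    define g where "g = mat3 (e/f) 0 0 0 1 0 0 0 (f/e)"
    have dg: "det g = 1" unfolding g_def using False nz by (simp add: field_simps)
    have "act (coset (mat 1), coset z2, coset (s2 ** nmat 0 0 1)) g = (coset (mat 1), coset z2, coset (s2 ** r))"
      by (rule act_eq[OF det_z2 det_sn dzr dg])
         (use False nz R(2) in \<open>simp_all add: g_def R(1) z2_def s2_def nmat_def field_simps\<close>)
    then show ?thesis using dg by (auto simp: SL3_def)
  next
    case f0: True
    have dg: "det (mat 1 :: mat3) = 1" by simp
    have "act (coset (mat 1), coset z2, coset (s2 ** nmat 0 0 0)) (mat 1) = (coset (mat 1), coset z2, coset (s2 ** r))"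
      by (rule act_eq[OF det_z2 det_sn dzr dg])
         (use f0 nz R(2) in \<open>simp_all add: mat1_mat3 R(1) z2_def s2_def nmat_def field_simps\<close>)
    then show ?thesis using one_SL3 by blast
  qed
qed



lemma cell_zz: "cell z2 z2 = orbit (coset (mat 1), coset z2, coset (z2 ** nmat 0 0 1)) \<union>
   orbit (coset (mat 1), coset z2, coset (z2 ** nmat 0 1 0)) \<union> orbit (coset (mat 1), coset z2, coset (z2 ** nmat 0 0 0))"
(is "?L = ?R")
proof
  show "?L \<subseteq> ?R"
  proof -
    have "cell z2 z2 \<subseteq> (\<Union>x\<in>{(coset (mat 1), coset z2, coset (z2 ** nmat 0 0 1)), (coset (mat 1), coset z2, coset (z2 ** nmat 0 1 0)),
             (coset (mat 1), coset z2, coset (z2 ** nmat 0 0 0))}. orbit x)"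
      by (rule cell_sub[OF det_z2 det_z2 core_zz]) auto
    then show ?thesis by auto
  qed
  show "?R \<subseteq> ?L"
    using orbit_sub_cell[OF n_P refl, where v=z2 and w=z2] by blast
qed

lemma cell_zs1: "cell z2 s1 = orbit (coset (mat 1), coset z2, coset s1)"
(is "?L = ?R")
proof
  show "?L \<subseteq> ?R"
  proof -
    have "cell z2 s1 \<subseteq> (\<Union>x\<in>{(coset (mat 1), coset z2, coset s1)}. orbit x)"
      by (rule cell_sub[OF det_z2 det_s1 core_zs1]) auto
    then show ?thesis by auto
  qed
  show "?R \<subseteq> ?L"
    by (rule orbit_sub_cell[OF P_one]) simp
qed

lemma cell_z1: "cell z2 (mat 1) = orbit (coset (mat 1), coset z2, coset (mat 1))"
(is "?L = ?R")
proof
  show "?L \<subseteq> ?R"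
  proof -
    have "cell z2 (mat 1) \<subseteq> (\<Union>x\<in>{(coset (mat 1), coset z2, coset (mat 1))}. orbit x)"
      by (rule cell_sub[OF det_z2 det_one core_z1]) auto
    then show ?thesis by auto
  qed
  show "?R \<subseteq> ?L"
    by (rule orbit_sub_cell[OF P_one]) simp
qed

lemma cell_zs2: "cell z2 s2 = orbit (coset (mat 1), coset z2, coset (s2 ** nmat 0 0 1)) \<union>
   orbit (coset (mat 1), coset z2, coset (s2 ** nmat 0 0 0))"
(is "?L = ?R")
proof
  show "?L \<subseteq> ?R"
  proof -
    have "cell z2 s2 \<subseteq> (\<Union>x\<in>{(coset (mat 1), coset z2, coset (s2 ** nmat 0 0 1)), (coset (mat 1), coset z2, coset (s2 ** nmat 0 0 0))}. orbit x)"
      by (rule cell_sub[OF det_z2 det_s2 core_zs2]) auto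
    then show ?thesis by auto
  qed
  show "?R \<subseteq> ?L"
    using orbit_sub_cell[OF n_P refl, where v=z2 and w=s2] by blast
qed

theorem mainTheorem10:
  shows
  \<comment> \<open>(a)\<close>
  "(let P0 = coset (mat 1);
        x1 = (P0, coset z2, coset (z2 ** nmat 0 0 1));
        x2 = (P0, coset z2, coset (z2 ** nmat 0 1 0));
        x3 = (P0, coset z2, coset (z2 ** nmat 0 0 0))
    in cell z2 z2 = orbit x1 \<union> orbit x2 \<union> orbit x3
     \<and> orbit x1 \<inter> orbit x2 = {} \<and> orbit x1 \<inter> orbit x3 = {} \<and> orbit x2 \<inter> orbit x3 = {}
     \<and> orbit_dim x1 = 7 \<and> stab x1 = {dmat (1 / a^2) a a | a. a \<noteq> 0}
     \<and> orbit_dim x2 = 6 \<and> stab x2 = {mat3 a z 0 0 (1 / a^2) 0 0 0 a | a z. a \<noteq> 0}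
     \<and> orbit_dim x3 = 5 \<and> stab x3 = setmul Dgrp {nmat x 0 0 | x. True})
   \<and>
  \<comment> \<open>(b)\<close>
   (let P0 = coset (mat 1);
        y = (P0, coset z2, coset s1);
        y' = (P0, coset z2, coset (mat 1))
    in cell z2 s1 = orbit y \<and> orbit_dim y = 6 \<and> stab y = Dgrp
     \<and> cell z2 (mat 1) = orbit y' \<and> orbit_dim y' = 5
     \<and> stab y' = setmul Dgrp {nmat x 0 0 | x. True})
   \<and>
  \<comment> \<open>(c)\<close>
   (let P0 = coset (mat 1);
        u1 = (P0, coset z2, coset (s2 ** nmat 0 0 1));
        u2 = (P0, coset z2, coset (s2 ** nmat 0 0 0))
    in cell z2 s2 = orbit u1 \<union> orbit u2 \<and> orbit u1 \<inter> orbit u2 = {}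
     \<and> orbit_dim u1 = 6 \<and> stab u1 = {mat3 (1 / a^2) x 0 0 a 0 0 0 a | a x. a \<noteq> 0}
     \<and> orbit_dim u2 = 5 \<and> stab u2 = setmul Dgrp {nmat x 0 0 | x. True})"
  unfolding Let_def orbit_dim_def
  using cell_zz cell_zs1 cell_z1 cell_zs2 disj_x12 disj_x13 disj_x23 disj_u12
    stab_x1 stab_x2 stab_x3 stab_y1 stab_y2 stab_u1 stab_u2
    dim_H1 dim_H2 dim_H3 dim_D dim_U1 group_dim_SL3 H3_eq
  unfolding H1set_def[symmetric] H2set_def[symmetric] U1set_def[symmetric]
  by simp

end
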